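(* Let $K\subseteq\mathbb{R}^{n}$ be compact and let $T\subseteq\mathbb{R}^{n}$ be compact with non-empty interior. Then \[ M_{\omega}(K,T)=M^{*}(K,T)=N^{*}(K,-T). \]
   Context: $\mathbbm{1}_A$ denotes the indicator function of $A$. $\mathcal{D}_{+}^{n}$ is the set of non-negative finite discrete measures on $\mathbb{R}^n$ (finite sums $\sum_i\omega_i\delta_{x_i}$ with $\omega_i\ge 0$), and $\mathcal{B}_{+}^{n}$ the set of non-negative regular Borel measures on $\mathbb{R}^n$. For a measure $\nu$, $(\nu*\mathbbm{1}_T)(x)=\int_{\mathbb{R}^n}\mathbbm{1}_T(x-y)\,d\nu(y)$. Define $N^{*}(K,T)=\inf\{\mu(\mathbb{R}^n): \mu\in\mathcal{B}_+^n,\ \mu*\mathbbm{1}_T\ge\mathbbm{1}_K \text{ on } \mathbb{R}^n\}$, $M_{\omega}(K,T)=\sup\{\nu(K): \nu\in\mathcal{D}_+^n,\ \nu*\mathbbm{1}_T\le 1 \text{ on } \mathbb{R}^n\}$, $M^{*}(K,T)=\sup\{\mu(K): \mu\in\mathcal{B}_+^n,\ \mu*\mathbbm{1}_T\le 1 \text{ on } \mathbb{R}^n\}$. *)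

theory Defs
  imports "HOL-Analysis.Analysis"
begin

definition conv_ind :: "'a::euclidean_space measure \<Rightarrow> 'a set \<Rightarrow> 'a \<Rightarrow> ennreal" where
  "conv_ind \<mu> T x = (\<integral>\<^sup>+ y. indicator T (x - y) \<partial>\<mu>)"

definition regular_borel :: "'a::euclidean_space measure \<Rightarrow> bool" where
  "regular_borel \<mu> \<longleftrightarrow> sets \<mu> = sets borel \<and>
     (\<forall>E \<in> sets borel.
        emeasure \<mu> E = (INF U \<in> {U. open U \<and> E \<subseteq> U}. emeasure \<mu> U) \<and>
        emeasure \<mu> E = (SUP C \<in> {C. compact C \<and> C \<subseteq> E}. emeasure \<mu> C))"

definition N_star :: "'a::euclidean_space set \<Rightarrow> 'a set \<Rightarrow> ennreal" where
  "N_star K T = (INF \<mu> \<in> {\<mu>. regular_borel \<mu> \<and> (\<forall>x. indicator K x \<le> conv_ind \<mu> T x)}.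
                    emeasure \<mu> UNIV)"

definition M_star :: "'a::euclidean_space set \<Rightarrow> 'a set \<Rightarrow> ennreal" where
  "M_star K T = (SUP \<mu> \<in> {\<mu>. regular_borel \<mu> \<and> (\<forall>x. conv_ind \<mu> T x \<le> 1)}. emeasure \<mu> K)"

text \<open>M_omega(K,T): supremum of nu(K) over finite discrete measures
  nu = sum_{x in S} w x delta_x (S finite, w >= 0) with nu*1_T <= 1; here
  (nu*1_T)(y) = sum_{x in S} w x * 1_T(y - x) and nu(K) = sum_{x in S, x in K} w x.\<close>
definition M_omega :: "'a::euclidean_space set \<Rightarrow> 'a set \<Rightarrow> ennreal" where
  "M_omega K T = (SUP (S, w) \<in> {(S, w). finite S \<and> (\<forall>x\<in>S. 0 \<le> (w x :: real)) \<and>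
                     (\<forall>y. (\<Sum>x\<in>S. w x * indicator T (y - x)) \<le> 1)}.
                  ennreal (\<Sum>x\<in>S \<inter> K. w x))"

end

theory Submission
  imports Defs "HOL-Probability.Probability"
begin


lemma regular_borel_finite:
  fixes M :: "'a::euclidean_space measure"
  assumes "sets M = sets borel" "emeasure M UNIV \<noteq> \<infinity>"
  shows "regular_borel M"
proof -
  have sp: "space M = UNIV" using assms(1) by (metis sets_eq_imp_space_eq space_borel)
  have fin: "emeasure M (space M) \<noteq> \<infinity>" using assms sp by simp
  show ?thesis unfolding regular_borel_def
  proof (intro conjI ballI)
    show "sets M = sets borel" by fact
  next
    fix E :: "'a set" assume E: "E \<in> sets borel"
    have "{U. open U \<and> E \<subseteq> U} = {U. E \<subseteq> U \<and> open U}" by auto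
    then show "emeasure M E = (INF U \<in> {U. open U \<and> E \<subseteq> U}. emeasure M U)"
      using outer_regular[OF assms(1) fin E] by simp
    have "{C. compact C \<and> C \<subseteq> E} = {K. K \<subseteq> E \<and> compact K}" by auto
    then show "emeasure M E = (SUP C \<in> {C. compact C \<and> C \<subseteq> E}. emeasure M C)"
      using inner_regular[OF assms(1) fin E] by simp
  qed
qed

lemma M_omega_le_M_star:
  fixes K T :: "'a::euclidean_space set"
  assumes "compact T" "compact K"
  shows "M_omega K T \<le> M_star K T"
  unfolding M_omega_def
proof (rule SUP_least, clarify)
  fix S and w :: "'a \<Rightarrow> real"
  assume S: "finite S" and w: "\<forall>x\<in>S. 0 \<le> w x"
    and pk: "\<forall>y. (\<Sum>x\<in>S. w x * indicator T (y - x)) \<le> 1"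
  define P where "P = point_measure S (\<lambda>x. ennreal (w x))"
  define \<mu> where "\<mu> = distr P borel (\<lambda>x. x)"
  have spP: "space P = S" unfolding P_def by (simp add: space_point_measure)
  have measP: "(\<lambda>x. x) \<in> measurable P borel"
    unfolding P_def point_measure_def by simp
  have Tb: "T \<in> sets borel" using assms by (simp add: compact_imp_closed)
  have sets\<mu>: "sets \<mu> = sets borel" unfolding \<mu>_def by simp
  have em: "emeasure \<mu> A = (\<Sum>x\<in>S \<inter> A. ennreal (w x))" if "A \<in> sets borel" for A
  proof -
    have "emeasure \<mu> A = emeasure P (S \<inter> A)"
      unfolding \<mu>_def using that measP by (subst emeasure_distr) (auto simp: spP Int_commute)
    also have "\<dots> = (\<Sum>x\<in>S \<inter> A. ennreal (w x))"
      unfolding P_def using S by (subst emeasure_point_measure_finite) auto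
    finally show ?thesis .
  qed
  have "emeasure \<mu> UNIV = (\<Sum>x\<in>S. ennreal (w x))" using em[of UNIV] by simp
  then have fin: "emeasure \<mu> UNIV \<noteq> \<infinity>" using S by simp
  have reg: "regular_borel \<mu>" by (rule regular_borel_finite[OF sets\<mu> fin])
  have conv: "conv_ind \<mu> T x \<le> 1" for x
  proof -
    have mi: "(\<lambda>y. indicator T (x - y) :: ennreal) \<in> borel_measurable borel"
      using Tb by measurable
    have "conv_ind \<mu> T x = (\<integral>\<^sup>+ y. indicator T (x - y) \<partial>P)"
      unfolding conv_ind_def \<mu>_def using mi measP by (subst nn_integral_distr) auto
    also have "\<dots> = (\<Sum>y\<in>S. ennreal (w y) * indicator T (x - y))"
      unfolding P_def using S by (rule nn_integral_point_measure_finite)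
    also have "\<dots> = (\<Sum>y\<in>S. ennreal (w y * indicator T (x - y)))"
      using w by (auto intro!: sum.cong simp: indicator_def ennreal_mult)
    also have "\<dots> = ennreal (\<Sum>y\<in>S. w y * indicator T (x - y))"
      using w by (intro sum_ennreal) (auto simp: indicator_def)
    also have "\<dots> \<le> 1" using pk by simp
    finally show ?thesis .
  qed
  have eqK: "ennreal (\<Sum>x\<in>S \<inter> K. w x) = emeasure \<mu> K"
    proof -
    have "ennreal (\<Sum>x\<in>S \<inter> K. w x) = (\<Sum>x\<in>S \<inter> K. ennreal (w x))"
      by (rule sum_ennreal[symmetric]) (use w in auto)
    moreover have "K \<in> sets borel" using assms(2) by (simp add: compact_imp_closed borel_closed)
    ultimately show ?thesis using em[of K] by argo
  qed
  have mem: "\<mu> \<in> {\<mu>. regular_borel \<mu> \<and> (\<forall>x. conv_ind \<mu> T x \<le> 1)}" using reg conv by auto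
  show "ennreal (\<Sum>x\<in>S \<inter> K. w x) \<le> M_star K T"
    unfolding M_star_def eqK by (rule SUP_upper[OF mem])
qed


lemma indicator_uminus_image:
  fixes T :: "'a::real_vector set"
  shows "indicator (uminus ` T) (x - z) = (indicator T (z - x) :: 'b::zero_neq_one)"
proof -
  have "x - z \<in> uminus ` T \<longleftrightarrow> z - x \<in> T"
  proof
    assume "x - z \<in> uminus ` T"
    then obtain t where "t \<in> T" "x - z = - t" by blast
    then have "z - x = t" by (simp add: algebra_simps)
    then show "z - x \<in> T" using \<open>t \<in> T\<close> by simp
  next
    assume "z - x \<in> T"
    moreover have "x - z = - (z - x)" by simp
    ultimately show "x - z \<in> uminus ` T" by blast
  qed
  then show ?thesis by (simp add: indicator_def)
qed

lemma packing_finite_on_compact: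
  fixes K T :: "'a::euclidean_space set"
  assumes K: "compact K" and T: "interior T \<noteq> {}" and rb: "sets \<mu> = sets borel"
    and pk: "\<forall>x. conv_ind \<mu> T x \<le> 1"
  shows "emeasure \<mu> K < \<infinity>"
proof -
  obtain t0 where "t0 \<in> interior T" using T by auto
  then obtain r where r: "r > 0" "ball t0 r \<subseteq> T" by (meson mem_interior)
  have "K \<subseteq> (\<Union>x\<in>K. ball x r)" using r by auto
  then obtain C where C: "C \<subseteq> K" "finite C" "K \<subseteq> (\<Union>x\<in>C. ball x r)"
    using compactE_image[OF K, of K "\<lambda>x. ball x r"] by auto
  have bl: "emeasure \<mu> (ball x r) \<le> 1" for x
  proof -
    have "emeasure \<mu> (ball x r) = (\<integral>\<^sup>+ y. indicator (ball x r) y \<partial>\<mu>)"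
      using rb by (simp add: nn_integral_indicator)
    also have "\<dots> \<le> (\<integral>\<^sup>+ y. indicator T (x + t0 - y) \<partial>\<mu>)"
    proof (rule nn_integral_mono)
      fix y assume "y \<in> space \<mu>"
      show "indicator (ball x r) y \<le> (indicator T (x + t0 - y) :: ennreal)"
      proof (cases "y \<in> ball x r")
        case True
        then have "x + t0 - y \<in> ball t0 r" by (simp add: dist_norm norm_minus_commute algebra_simps)
        then show ?thesis using r True by auto
      qed simp
    qed
    also have "\<dots> \<le> 1" using pk unfolding conv_ind_def by auto
    finally show ?thesis .
  qed
  have sb: "ball x r \<in> sets \<mu>" for x using rb by simp
  have "emeasure \<mu> K \<le> emeasure \<mu> (\<Union>x\<in>C. ball x r)"
    using C rb by (intro emeasure_mono) auto
  also have "\<dots> \<le> (\<Sum>x\<in>C. emeasure \<mu> (ball x r))"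
    using C sb by (intro emeasure_subadditive_finite) auto
  also have "\<dots> \<le> (\<Sum>x\<in>C. 1)" by (intro sum_mono bl)
  also have "\<dots> < \<infinity>" by (simp add: of_nat_less_top)
  finally show ?thesis .
qed

lemma weak_duality:
  fixes K T :: "'a::euclidean_space set"
  assumes K: "compact K" and Tc: "compact T" and T: "interior T \<noteq> {}"
    and rb: "sets \<mu> = sets borel" and pk: "\<forall>x. conv_ind \<mu> T x \<le> 1"
    and rl: "sets \<nu> = sets borel" and cv: "\<forall>x. indicator K x \<le> conv_ind \<nu> (uminus ` T) x"
  shows "emeasure \<mu> K \<le> emeasure \<nu> UNIV"
proof (cases "emeasure \<nu> UNIV = \<infinity>")
  case True then show ?thesis by simp
next
  case False
  have spl: "space \<nu> = UNIV" using rl by (metis sets_eq_imp_space_eq space_borel)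
  have spm: "space \<mu> = UNIV" using rb by (metis sets_eq_imp_space_eq space_borel)
  have Kb: "K \<in> sets borel" using K by (simp add: compact_imp_closed borel_closed)
  have Tb: "T \<in> sets borel" using Tc by (simp add: compact_imp_closed borel_closed)
  have Tb': "uminus ` T \<in> sets borel"
    using Tc by (simp add: compact_imp_closed borel_closed compact_negations)
  have Km: "K \<in> sets \<mu>" using Kb rb by simp
  have indK: "indicator K \<in> borel_measurable \<mu>" using Km by (rule borel_measurable_indicator)
  define \<mu>' where "\<mu>' = density \<mu> (indicator K)"
  have sm': "sets \<mu>' = sets borel" unfolding \<mu>'_def using rb by simp
  have spm': "space \<mu>' = UNIV" unfolding \<mu>'_def using spm by simp
  have fin: "emeasure \<mu> K < \<infinity>" by (rule packing_finite_on_compact[OF K T rb pk])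
  have "emeasure \<mu>' UNIV = (\<integral>\<^sup>+ x. indicator K x * indicator UNIV x \<partial>\<mu>)"
    unfolding \<mu>'_def using indK sets.top[of \<mu>, unfolded spm] by (subst emeasure_density) simp_all
  also have "\<dots> = (\<integral>\<^sup>+ x. indicator K x \<partial>\<mu>)" by simp
  also have "\<dots> = emeasure \<mu> K" using Km by (rule nn_integral_indicator)
  finally have "emeasure \<mu>' UNIV = emeasure \<mu> K" .
  then have fm: "finite_measure \<mu>'" using fin spm' by (intro finite_measureI) simp
  have fl: "finite_measure \<nu>" using False spl by (intro finite_measureI) simp
  have "sigma_finite_measure \<mu>'" using fm by (rule finite_measure.sigma_finite_measure)
  moreover have "sigma_finite_measure \<nu>" using fl by (rule finite_measure.sigma_finite_measure)
  ultimately interpret P: pair_sigma_finite \<mu>' \<nu>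
    unfolding pair_sigma_finite_def by (intro conjI)
  have meas: "(\<lambda>(x, z). indicator (uminus ` T) (x - z) :: ennreal) \<in> borel_measurable (\<mu>' \<Otimes>\<^sub>M \<nu>)"
  proof -
    have 1: "(\<lambda>(x, z). indicator (uminus ` T) (x - z) :: ennreal) \<in> borel_measurable (borel \<Otimes>\<^sub>M borel)"
      using Tb' by measurable
    have 2: "sets (\<mu>' \<Otimes>\<^sub>M \<nu>) = sets (borel \<Otimes>\<^sub>M (borel::'a measure))"
      using sm' rl by (intro sets_pair_measure_cong) auto
    show ?thesis using 1 unfolding measurable_cong_sets[OF 2 refl] .
  qed
  have m2: "(\<lambda>z. indicator (uminus ` T) (x - z) :: ennreal) \<in> borel_measurable \<nu>" for x
  proof -
    have "(\<lambda>z. indicator (uminus ` T) (x - z) :: ennreal) \<in> borel_measurable borel"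
      using Tb' by measurable
    then show ?thesis by (simp add: measurable_cong_sets[OF rl refl])
  qed
  have m3: "(\<lambda>x. indicator T (z - x) :: ennreal) \<in> borel_measurable \<mu>" for z
  proof -
    have "(\<lambda>x. indicator T (z - x) :: ennreal) \<in> borel_measurable borel"
      using Tb by measurable
    then show ?thesis by (simp add: measurable_cong_sets[OF rb refl])
  qed
  have "emeasure \<mu> K = (\<integral>\<^sup>+ x. indicator K x \<partial>\<mu>)"
    using Km by (rule nn_integral_indicator[symmetric])
  also have "\<dots> \<le> (\<integral>\<^sup>+ x. indicator K x * conv_ind \<nu> (uminus ` T) x \<partial>\<mu>)"
  proof (rule nn_integral_mono)
    fix x
    show "indicator K x \<le> indicator K x * conv_ind \<nu> (uminus ` T) x"
      using cv[rule_format, of x] by (cases "x \<in> K") simp_all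
  qed
  also have "\<dots> = (\<integral>\<^sup>+ x. conv_ind \<nu> (uminus ` T) x \<partial>\<mu>')"
  proof -
    have "(\<lambda>x. conv_ind \<nu> (uminus ` T) x) \<in> borel_measurable \<mu>"
    proof -
      have "(\<lambda>x. \<integral>\<^sup>+ z. (\<lambda>(x, z). indicator (uminus ` T) (x - z) :: ennreal) (x, z) \<partial>\<nu>) \<in> borel_measurable \<mu>'"
        by (rule P.M2.borel_measurable_nn_integral_fst[OF meas])
      then show ?thesis unfolding conv_ind_def
        by (simp add: measurable_cong_sets[OF sm' refl] measurable_cong_sets[OF rb refl])
    qed
    then show ?thesis unfolding \<mu>'_def using indK by (subst nn_integral_density) simp_all
  qed
  also have "\<dots> = (\<integral>\<^sup>+ x. \<integral>\<^sup>+ z. indicator (uminus ` T) (x - z) \<partial>\<nu> \<partial>\<mu>')"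
    unfolding conv_ind_def ..
  also have "\<dots> = (\<integral>\<^sup>+ z. \<integral>\<^sup>+ x. indicator (uminus ` T) (x - z) \<partial>\<mu>' \<partial>\<nu>)"
    using P.Fubini'[OF meas] by simp
  also have "\<dots> \<le> (\<integral>\<^sup>+ z. 1 \<partial>\<nu>)"
  proof (rule nn_integral_mono)
    fix z
    have "(\<integral>\<^sup>+ x. indicator (uminus ` T) (x - z) \<partial>\<mu>') = (\<integral>\<^sup>+ x. indicator K x * indicator T (z - x) \<partial>\<mu>)"
      unfolding \<mu>'_def indicator_uminus_image using indK m3 by (rule nn_integral_density)
    also have "\<dots> \<le> (\<integral>\<^sup>+ x. indicator T (z - x) \<partial>\<mu>)"
    proof (rule nn_integral_mono)
      fix x show "indicator K x * indicator T (z - x) \<le> (indicator T (z - x) :: ennreal)"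
        by (cases "x \<in> K") simp_all
    qed
    also have "\<dots> \<le> 1" using pk[rule_format, of z] unfolding conv_ind_def .
    finally show "(\<integral>\<^sup>+ x. indicator (uminus ` T) (x - z) \<partial>\<mu>') \<le> 1" .
  qed
  also have "\<dots> = emeasure \<nu> UNIV" using spl by simp
  finally show ?thesis .
qed



definition mw_choose :: "real \<Rightarrow> 'b set \<Rightarrow> ('c \<Rightarrow> 'b \<Rightarrow> bool) \<Rightarrow> ('b \<Rightarrow> real) \<Rightarrow> 'c" where
  "mw_choose m F A W = (SOME z. (\<Sum>y\<in>F. W y) / m \<le> (\<Sum>y\<in>F. if A z y then W y else 0))"

primrec mw_W :: "real \<Rightarrow> real \<Rightarrow> 'b set \<Rightarrow> ('c \<Rightarrow> 'b \<Rightarrow> bool) \<Rightarrow> nat \<Rightarrow> 'b \<Rightarrow> real" where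
  "mw_W \<eta> m F A 0 = (\<lambda>y. 1)"
| "mw_W \<eta> m F A (Suc t) = (\<lambda>y. mw_W \<eta> m F A t y *
      (if A (mw_choose m F A (mw_W \<eta> m F A t)) y then 1 - \<eta> else 1))"

lemma mw_bound:
  fixes F :: "'b set" and A :: "'c \<Rightarrow> 'b \<Rightarrow> bool" and m \<eta> :: real
  assumes F: "finite F" "F \<noteq> {}" and m: "m \<ge> 1" and \<eta>: "0 < \<eta>" "\<eta> < 1"
    and good: "\<And>W. (\<forall>y\<in>F. W y > 0) \<Longrightarrow> \<exists>z. (\<Sum>y\<in>F. W y) / m \<le> (\<Sum>y\<in>F. if A z y then W y else 0)"
  defines "zs \<equiv> \<lambda>t. mw_choose m F A (mw_W \<eta> m F A t)"
  shows "\<And>y. y \<in> F \<Longrightarrow> (1 - \<eta>) ^ (\<Sum>s<R. if A (zs s) y then 1 else 0) \<le> real (card F) * (1 - \<eta> / m) ^ R"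
proof -
  let ?W = "mw_W \<eta> m F A"
  have pos: "\<forall>y\<in>F. ?W t y > 0" for t
    by (induction t) (use \<eta> in auto)
  have ch: "(\<Sum>y\<in>F. ?W t y) / m \<le> (\<Sum>y\<in>F. if A (zs t) y then ?W t y else 0)" for t
  proof -
    from good[OF pos[of t]] obtain z where "(\<Sum>y\<in>F. ?W t y) / m \<le> (\<Sum>y\<in>F. if A z y then ?W t y else 0)" by blast
    then show ?thesis unfolding zs_def mw_choose_def by (rule someI)
  qed
  have step: "(\<Sum>y\<in>F. ?W (Suc t) y) \<le> (1 - \<eta> / m) * (\<Sum>y\<in>F. ?W t y)" for t
  proof -
    have "(\<Sum>y\<in>F. ?W (Suc t) y) = (\<Sum>y\<in>F. ?W t y - \<eta> * (if A (zs t) y then ?W t y else 0))"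
      unfolding zs_def by (intro sum.cong) (auto simp: algebra_simps)
    also have "\<dots> = (\<Sum>y\<in>F. ?W t y) - \<eta> * (\<Sum>y\<in>F. if A (zs t) y then ?W t y else 0)"
      by (simp add: sum_subtractf sum_distrib_left)
    also have "\<dots> \<le> (\<Sum>y\<in>F. ?W t y) - \<eta> * ((\<Sum>y\<in>F. ?W t y) / m)"
      using ch[of t] \<eta> by (intro diff_left_mono mult_left_mono) auto
    also have "\<dots> = (1 - \<eta> / m) * (\<Sum>y\<in>F. ?W t y)" by (simp add: algebra_simps)
    finally show ?thesis .
  qed
  have q0: "0 \<le> 1 - \<eta> / m" using m \<eta> by (simp add: field_simps)
  have Phi: "(\<Sum>y\<in>F. ?W t y) \<le> real (card F) * (1 - \<eta> / m) ^ t" for t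
  proof (induction t)
    case 0 then show ?case by simp
  next
    case (Suc t)
    have "(\<Sum>y\<in>F. ?W (Suc t) y) \<le> (1 - \<eta> / m) * (\<Sum>y\<in>F. ?W t y)" by (rule step)
    also have "\<dots> \<le> (1 - \<eta> / m) * (real (card F) * (1 - \<eta> / m) ^ t)"
      using Suc q0 by (intro mult_left_mono) auto
    finally show ?case by (simp add: algebra_simps)
  qed
  have Wexp: "?W t y = (1 - \<eta>) ^ (\<Sum>s<t. if A (zs s) y then 1 else 0)" for t y
    by (induction t) (auto simp: zs_def power_add)
  fix y assume y: "y \<in> F"
  have "?W R y \<le> (\<Sum>y\<in>F. ?W R y)"
    using pos[of R] y F by (intro member_le_sum) auto
  then show "(1 - \<eta>) ^ (\<Sum>s<R. if A (zs s) y then 1 else 0) \<le> real (card F) * (1 - \<eta> / m) ^ R"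
    using Phi[of R] Wexp[of R y] by simp
qed


lemma mw_numeric:
  fixes m \<eta> \<epsilon> :: real and c R N :: nat
  assumes m: "m \<ge> 1" and \<epsilon>: "\<epsilon> > 0" and \<eta>: "0 < \<eta>" "\<eta> \<le> 1/2" "2 * \<eta> \<le> \<epsilon> / 2"
    and N: "N \<ge> 1"
    and R: "real R * \<epsilon> * \<eta> \<ge> 2 * m * (1 + \<epsilon>) * ln (real N)"
    and bd: "(1 - \<eta>) ^ c \<le> real N * (1 - \<eta> / m) ^ R"
  shows "real R \<le> (1 + \<epsilon>) * m * real c"
proof -
  have p1: "0 < 1 - \<eta>" using \<eta> by simp
  have p2: "0 < 1 - \<eta> / m" using \<eta> m by (simp add: field_simps)
  have "ln ((1 - \<eta>) ^ c) \<le> ln (real N * (1 - \<eta> / m) ^ R)"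
    using bd p1 p2 N by (subst ln_le_cancel_iff) auto
  moreover have "ln (real N * (1 - \<eta> / m) ^ R) = ln (real N) + real R * ln (1 - \<eta> / m)"
    using p2 N by (subst ln_mult) (auto simp: ln_realpow)
  moreover have "ln ((1 - \<eta>) ^ c) = real c * ln (1 - \<eta>)" using p1 by (simp add: ln_realpow)
  ultimately have "real c * ln (1 - \<eta>) \<le> ln (real N) + real R * ln (1 - \<eta> / m)" by simp
  moreover have "ln (1 - \<eta> / m) \<le> - (\<eta> / m)" using ln_le_minus_one[OF p2] by simp
  moreover have "- \<eta> - 2 * \<eta>\<^sup>2 \<le> ln (1 - \<eta>)" using \<eta> by (intro ln_one_minus_pos_lower_bound) auto
  ultimately have A: "real c * (- \<eta> - 2 * \<eta>\<^sup>2) \<le> ln (real N) - real R * (\<eta> / m)"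
  proof -
    assume a1: "real c * ln (1 - \<eta>) \<le> ln (real N) + real R * ln (1 - \<eta> / m)"
      and a2: "ln (1 - \<eta> / m) \<le> - (\<eta> / m)" and a3: "- \<eta> - 2 * \<eta>\<^sup>2 \<le> ln (1 - \<eta>)"
    have "real c * (- \<eta> - 2 * \<eta>\<^sup>2) \<le> real c * ln (1 - \<eta>)" using a3 by (intro mult_left_mono) auto
    also have "\<dots> \<le> ln (real N) + real R * ln (1 - \<eta> / m)" by (rule a1)
    also have "\<dots> \<le> ln (real N) + real R * (- (\<eta> / m))" using a2 by (intro add_left_mono mult_left_mono) auto
    finally show ?thesis by simp
  qed
  have e2: "\<eta> + 2 * \<eta>\<^sup>2 \<le> \<eta> * (1 + \<epsilon> / 2)"
  proof -
    have "2 * \<eta>\<^sup>2 = \<eta> * (2 * \<eta>)" by (simp add: power2_eq_square)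
    also have "\<dots> \<le> \<eta> * (\<epsilon> / 2)" using \<eta> by (intro mult_left_mono) auto
    finally show ?thesis by (simp add: algebra_simps)
  qed
  have B: "real R * (\<eta> / m) - ln (real N) \<le> real c * (\<eta> * (1 + \<epsilon> / 2))"
  proof -
    have "real c * (\<eta> + 2 * \<eta>\<^sup>2) \<le> real c * (\<eta> * (1 + \<epsilon> / 2))" using e2 by (intro mult_left_mono) auto
    then show ?thesis using A by (simp add: algebra_simps)
  qed
  have lnN: "ln (real N) \<le> real R * \<epsilon> * \<eta> / (2 * m * (1 + \<epsilon>))"
  proof -
    have pos: "2 * m * (1 + \<epsilon>) > 0" using m \<epsilon> by simp
    have "ln (real N) * (2 * m * (1 + \<epsilon>)) \<le> real R * \<epsilon> * \<eta>" using R by (simp add: algebra_simps)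
    then show ?thesis using pos by (simp add: pos_le_divide_eq)
  qed
  have "real R * (\<eta> / m) - real R * \<epsilon> * \<eta> / (2 * m * (1 + \<epsilon>)) \<le> real c * (\<eta> * (1 + \<epsilon> / 2))"
    using B lnN by linarith
  moreover have "real R * (\<eta> / m) - real R * \<epsilon> * \<eta> / (2 * m * (1 + \<epsilon>))
      = (\<eta> * (1 + \<epsilon> / 2)) * (real R / (m * (1 + \<epsilon>)))"
  proof -
    have "m \<noteq> 0" "1 + \<epsilon> \<noteq> 0" "m * 2 + \<epsilon> * (m * 2) \<noteq> 0" "2 * m * (1 + \<epsilon>) \<noteq> 0"
    proof -
      have "2 * m * (1 + \<epsilon>) > 0" using m \<epsilon> by simp
      then show "m \<noteq> 0" "1 + \<epsilon> \<noteq> 0" "m * 2 + \<epsilon> * (m * 2) \<noteq> 0" "2 * m * (1 + \<epsilon>) \<noteq> 0"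
        using m \<epsilon> by (auto simp: algebra_simps)
    qed
    moreover have "m * (m * 2) + \<epsilon> * (m * (m * 2)) \<noteq> 0"
    proof -
      have "m * (m * 2) + \<epsilon> * (m * (m * 2)) = m * (2 * m * (1 + \<epsilon>))" by (simp add: algebra_simps)
      moreover have "m * (2 * m * (1 + \<epsilon>)) > 0" using m \<epsilon> by simp
      ultimately show ?thesis by (metis less_irrefl)
    qed
    ultimately show ?thesis by (simp add: field_simps)
  qed
  ultimately have "(\<eta> * (1 + \<epsilon> / 2)) * (real R / (m * (1 + \<epsilon>))) \<le> (\<eta> * (1 + \<epsilon> / 2)) * real c"
    by (simp add: algebra_simps)
  then have "real R / (m * (1 + \<epsilon>)) \<le> real c"
    using \<eta> \<epsilon> by (subst (asm) mult_le_cancel_left_pos) auto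
  moreover have "m * (1 + \<epsilon>) > 0" using m \<epsilon> by simp
  ultimately show ?thesis by (simp add: divide_le_eq algebra_simps)
qed

lemma mw_cover:
  fixes F :: "'b set" and A :: "'c \<Rightarrow> 'b \<Rightarrow> bool" and m \<epsilon> :: real
  assumes F: "finite F" "F \<noteq> {}" and m: "m \<ge> 1" and \<epsilon>: "\<epsilon> > 0"
    and good: "\<And>W. (\<forall>y\<in>F. W y > 0) \<Longrightarrow> \<exists>z. (\<Sum>y\<in>F. W y) / m \<le> (\<Sum>y\<in>F. if A z y then W y else 0)"
  shows "\<exists>R>0. \<exists>zs::nat \<Rightarrow> 'c. \<forall>y\<in>F. real R \<le> (1 + \<epsilon>) * m * real (card {t\<in>{..<R}. A (zs t) y})"
proof -
  define \<eta> where "\<eta> = min (1/2) (\<epsilon> / 4)"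
  have \<eta>: "0 < \<eta>" "\<eta> \<le> 1/2" "2 * \<eta> \<le> \<epsilon> / 2" "\<eta> < 1" using \<epsilon> unfolding \<eta>_def by auto
  define N where "N = card F"
  have N: "N \<ge> 1" using F unfolding N_def by (simp add: Suc_leI card_gt_0_iff)
  obtain R0 :: nat where R0: "2 * m * (1 + \<epsilon>) * ln (real N) / (\<epsilon> * \<eta>) < real R0"
    using reals_Archimedean2 by blast
  define R where "R = Suc R0"
  have "2 * m * (1 + \<epsilon>) * ln (real N) / (\<epsilon> * \<eta>) \<le> real R" using R0 unfolding R_def by simp
  then have R: "real R * \<epsilon> * \<eta> \<ge> 2 * m * (1 + \<epsilon>) * ln (real N)"
    using \<epsilon> \<eta> by (simp add: field_simps)
  define zs where "zs = (\<lambda>t. mw_choose m F A (mw_W \<eta> m F A t))"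
  have "\<forall>y\<in>F. real R \<le> (1 + \<epsilon>) * m * real (card {t\<in>{..<R}. A (zs t) y})"
  proof
    fix y assume y: "y \<in> F"
    have cnt: "(\<Sum>s<R. if A (zs s) y then 1 else 0) = card {t\<in>{..<R}. A (zs t) y}"
      by (simp add: sum.If_cases Int_def conj_commute)
    have bd: "(1 - \<eta>) ^ (card {t\<in>{..<R}. A (zs t) y}) \<le> real N * (1 - \<eta> / m) ^ R"
      using mw_bound[OF F m \<eta>(1) \<eta>(4) good y, of R] unfolding zs_def N_def cnt[unfolded zs_def] .
    show "real R \<le> (1 + \<epsilon>) * m * real (card {t\<in>{..<R}. A (zs t) y})"
      by (rule mw_numeric[OF m \<epsilon> \<eta>(1-3) N R bd])
  qed
  then show ?thesis unfolding R_def by blast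
qed



definition cg :: "real \<Rightarrow> real" where "cg s = min 1 (max 0 (1/2 - cos (2 * pi * s)))"

definition bdig :: "nat \<Rightarrow> real \<Rightarrow> bool" where
  "bdig i x \<longleftrightarrow> \<lfloor>2 ^ Suc i * x\<rfloor> - 2 * \<lfloor>2 ^ i * x\<rfloor> = 1"

definition ccode :: "(nat \<Rightarrow> bool) \<Rightarrow> real" where
  "ccode d = (\<Sum>q. 2 * of_bool (d q) / 4 ^ Suc q)"

definition cdec :: "nat \<Rightarrow> nat \<Rightarrow> real \<Rightarrow> real" where
  "cdec n c t = (\<Sum>i. cg (4 ^ (n * i + c) * t) / 2 ^ Suc i)"

lemma cg_bounds: "0 \<le> cg s" "cg s \<le> 1" unfolding cg_def by auto

lemma continuous_cg: "continuous_on UNIV cg"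
  unfolding cg_def by (intro continuous_intros)

lemma summable_geo4: "summable (\<lambda>q. c / 4 ^ q :: real)"
proof -
  have "summable (\<lambda>q. c * (1/4) ^ q :: real)" by (intro summable_mult summable_geometric) simp
  then show ?thesis by (simp add: power_one_over)
qed

lemma cg_ccode: "cg (4 ^ p * ccode d) = of_bool (d p)"
proof -
  define a :: "nat \<Rightarrow> real" where "a q = 2 * of_bool (d q) / 4 ^ Suc q" for q
  have sa: "summable a"
  proof (rule summable_comparison_test[OF _ summable_geo4[of 2]])
    show "\<exists>N. \<forall>n\<ge>N. norm (a n) \<le> 2 / 4 ^ n" by (auto simp: a_def divide_simps)
  qed
  have "4 ^ p * ccode d = (\<Sum>q. 4 ^ p * a q)"
    unfolding ccode_def a_def[symmetric] using sa by (rule suminf_mult[symmetric])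
  also have "\<dots> = (\<Sum>q. 4 ^ p * a (q + Suc p)) + (\<Sum>q<Suc p. 4 ^ p * a q)"
    using summable_mult[OF sa] by (rule suminf_split_initial_segment)
  finally have e1: "4 ^ p * ccode d = (\<Sum>q. 4 ^ p * a (q + Suc p)) + (\<Sum>q<p. 4 ^ p * a q) + of_bool (d p) / 2"
    by (simp add: a_def)
  define r where "r = (\<Sum>q. 4 ^ p * a (q + Suc p))"
  have rq: "4 ^ p * a (q + Suc p) = 2 * of_bool (d (q + Suc p)) / 4 ^ (q + 2)" for q
    by (simp add: a_def power_add)
  have r0: "0 \<le> r"
    unfolding r_def by (rule suminf_nonneg) (use summable_mult[OF summable_ignore_initial_segment[OF sa, of "Suc p"], of "4^p"] in \<open>auto simp: a_def\<close>)
  have r1: "r \<le> 1/6"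
  proof -
    have s1: "summable (\<lambda>q. 4 ^ p * a (q + Suc p))"
      using summable_mult[OF summable_ignore_initial_segment[OF sa, of "Suc p"], of "4^p"] by simp
    have s2: "summable (\<lambda>q. (1/8) * (1/4) ^ q :: real)" by (intro summable_mult summable_geometric) simp
    have "r \<le> (\<Sum>q. (1/8) * (1/4) ^ q)"
      unfolding r_def
    proof (rule suminf_le[OF _ s1 s2])
      fix q
      have "4 ^ p * a (q + Suc p) \<le> 2 / 4 ^ (q + 2)" unfolding rq by (auto simp: divide_simps)
      also have "\<dots> = (1/8) * (1/4) ^ q" by (simp add: power_add power_one_over)
      finally show "4 ^ p * a (q + Suc p) \<le> (1/8) * (1/4) ^ q" .
    qed
    also have "\<dots> = (1/8) * (4/3)"
    proof -
      have "(\<Sum>q. (1/8) * (1/4::real) ^ q) = (1/8) * (\<Sum>q. (1/4::real) ^ q)"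
        by (rule suminf_mult) (rule summable_geometric, simp)
      also have "(\<Sum>q. (1/4::real) ^ q) = 1 / (1 - 1/4)" by (rule suminf_geometric) simp
      finally show ?thesis by simp
    qed
    finally show ?thesis by simp
  qed
  define I :: int where "I = (\<Sum>q<p. 2 * of_bool (d q) * 4 ^ (p - Suc q))"
  have eI: "(\<Sum>q<p. 4 ^ p * a q) = of_int I"
    unfolding I_def of_int_sum
  proof (rule sum.cong[OF refl])
    fix q assume "q \<in> {..<p}"
    then have "p = (p - Suc q) + Suc q" by simp
    then have "(4::real) ^ p = 4 ^ (p - Suc q) * 4 ^ Suc q" by (metis power_add)
    then show "4 ^ p * a q = of_int (2 * of_bool (d q) * 4 ^ (p - Suc q))"
      by (simp add: a_def)
  qed
  have main: "4 ^ p * ccode d = of_int I + (of_bool (d p) / 2 + r)"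
    using e1 eI unfolding r_def by simp
  have cosI: "cos (2 * pi * (of_int I + x)) = cos (2 * pi * x)" for x
  proof -
    have "2 * pi * (of_int I + x) = 2 * pi * x + of_int I * (2 * of_real pi)" by (simp add: algebra_simps)
    then show ?thesis using cos.plus_of_int[of "2 * pi * x" I] by simp
  qed
  show ?thesis
  proof (cases "d p")
    case False
    have "cos (pi / 3) \<le> cos (2 * pi * r)"
      using r0 r1 by (intro cos_monotone_0_pi_le) auto
    then have "1/2 - cos (2 * pi * r) \<le> 0" by (simp add: cos_60)
    then show ?thesis unfolding cg_def main cosI using False by simp
  next
    case True
    have "cos (pi / 3) \<le> cos (2 * pi * r)"
      using r0 r1 by (intro cos_monotone_0_pi_le) auto
    moreover have "cos (2 * pi * (1/2 + r)) = - cos (2 * pi * r)"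
    proof -
      have "2 * pi * (1/2 + r) = 2 * pi * r + pi" by (simp add: algebra_simps)
      then show ?thesis by simp
    qed
    ultimately have "1 \<le> 1/2 - cos (2 * pi * (1/2 + r))" by (simp add: cos_60)
    then show ?thesis unfolding cg_def main cosI using True by simp
  qed
qed


lemma floor_double_diff: "\<lfloor>2 * (y::real)\<rfloor> - 2 * \<lfloor>y\<rfloor> \<in> {0, 1::int}"
proof -
  have "of_int (2 * \<lfloor>y\<rfloor>) \<le> 2 * y" by simp
  then have a: "2 * \<lfloor>y\<rfloor> \<le> \<lfloor>2 * y\<rfloor>" by (simp only: le_floor_iff)
  have b: "\<lfloor>2 * y\<rfloor> < 2 * \<lfloor>y\<rfloor> + 2"
  proof -
    have "y < of_int \<lfloor>y\<rfloor> + 1" by linarith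
    then have "2 * y < 2 * (of_int \<lfloor>y\<rfloor> + 1)" by (intro mult_strict_left_mono) auto
    then have "2 * y < of_int (2 * (\<lfloor>y\<rfloor> + 1))" by simp
    then have "\<lfloor>2 * y\<rfloor> < 2 * (\<lfloor>y\<rfloor> + 1)" by (simp only: floor_less_iff)
    then show ?thesis by simp
  qed
  from a b show ?thesis by auto
qed

lemma of_bool_bdig: "of_bool (bdig i x) = (of_int (\<lfloor>2 ^ Suc i * x\<rfloor> - 2 * \<lfloor>2 ^ i * x\<rfloor>) :: real)"
proof -
  have "\<lfloor>2 ^ Suc i * x\<rfloor> = \<lfloor>2 * (2 ^ i * x)\<rfloor>" by (simp add: mult.assoc)
  then have "\<lfloor>2 ^ Suc i * x\<rfloor> - 2 * \<lfloor>2 ^ i * x\<rfloor> \<in> {0, 1}" using floor_double_diff[of "2 ^ i * x"] by simp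
  then show ?thesis unfolding bdig_def by auto
qed

lemma bdig_partial:
  assumes "0 \<le> x" "x < 1"
  shows "(\<Sum>i<N. of_bool (bdig i x) / 2 ^ Suc i) = (of_int \<lfloor>2 ^ N * x\<rfloor> / 2 ^ N :: real)"
proof (induction N)
  case 0
  have "\<lfloor>x\<rfloor> = 0" using assms by (simp add: floor_eq_iff)
  then show ?case by simp
next
  case (Suc N)
  have "(\<Sum>i<Suc N. of_bool (bdig i x) / 2 ^ Suc i) = (of_int \<lfloor>2 ^ N * x\<rfloor> / 2 ^ N + of_bool (bdig N x) / 2 ^ Suc N :: real)"
    using Suc by simp
  also have "\<dots> = of_int \<lfloor>2 ^ Suc N * x\<rfloor> / 2 ^ Suc N"
    unfolding of_bool_bdig by (simp add: field_simps)
  finally show ?case .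
qed

lemma bdig_sums:
  assumes "0 \<le> x" "x < 1"
  shows "(\<lambda>i. of_bool (bdig i x) / 2 ^ Suc i :: real) sums x"
  unfolding sums_def bdig_partial[OF assms]
proof (rule tendsto_sandwich[of "\<lambda>N. x - (1/2) ^ N" _ _ "\<lambda>N. x"])
  show "\<forall>\<^sub>F N in sequentially. x - (1/2) ^ N \<le> of_int \<lfloor>2 ^ N * x\<rfloor> / 2 ^ N"
  proof (rule always_eventually, rule allI)
    fix N :: nat
    have "2 ^ N * x - 1 \<le> of_int \<lfloor>2 ^ N * x\<rfloor>" by linarith
    then have "(2 ^ N * x - 1) / 2 ^ N \<le> of_int \<lfloor>2 ^ N * x\<rfloor> / 2 ^ N"
      by (intro divide_right_mono) auto
    moreover have "(2 ^ N * x - 1) / 2 ^ N = x - (1/2) ^ N"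
      by (simp add: field_simps power_one_over)
    ultimately show "x - (1/2) ^ N \<le> of_int \<lfloor>2 ^ N * x\<rfloor> / 2 ^ N" by simp
  qed
  show "\<forall>\<^sub>F N in sequentially. of_int \<lfloor>2 ^ N * x\<rfloor> / 2 ^ N \<le> x"
  proof (rule always_eventually, rule allI)
    fix N :: nat
    have "of_int \<lfloor>2 ^ N * x\<rfloor> \<le> 2 ^ N * x" by linarith
    then show "of_int \<lfloor>2 ^ N * x\<rfloor> / 2 ^ N \<le> x" by (simp add: field_simps)
  qed
  show "(\<lambda>N. x - (1/2) ^ N) \<longlonglongrightarrow> x"
    using tendsto_diff[OF tendsto_const LIMSEQ_power_zero[of "1/2::real"]] by simp
  show "(\<lambda>N. x) \<longlonglongrightarrow> x" by simp
qed

lemma continuous_cdec: "continuous_on UNIV (cdec n c)"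
proof -
  have ul: "uniform_limit UNIV (\<lambda>N t. \<Sum>i<N. cg (4 ^ (n * i + c) * t) / 2 ^ Suc i) (cdec n c) sequentially"
    unfolding cdec_def
  proof (rule Weierstrass_m_test)
    show "norm (cg (4 ^ (n * i + c) * t) / 2 ^ Suc i) \<le> (1/2) ^ Suc i" for i t
      using cg_bounds[of "4 ^ (n * i + c) * t"] by (simp add: power_one_over divide_simps)
    show "summable (\<lambda>i. (1/2::real) ^ Suc i)" by (rule summable_ignore_initial_segment[of _ 1, simplified]) (rule summable_geometric, simp)
  qed
  show ?thesis
  proof (rule uniform_limit_theorem[OF _ ul])
    have "continuous_on UNIV (\<lambda>t. cg (4 ^ (n * i + c) * t) / 2 ^ Suc i)" for i
      by (intro continuous_intros continuous_on_compose2[OF continuous_cg]) auto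
    then show "\<forall>\<^sub>F N in sequentially. continuous_on UNIV (\<lambda>t. \<Sum>i<N. cg (4 ^ (n * i + c) * t) / 2 ^ Suc i)"
      by (intro always_eventually allI continuous_on_sum) auto
  qed simp
qed

lemma cdec_ccode:
  assumes c: "c < n" and d: "\<And>p. d p = bdig (p div n) (u (p mod n))" and u: "0 \<le> u c" "u c < 1"
  shows "cdec n c (ccode d) = u c"
proof -
  have "cg (4 ^ (n * i + c) * ccode d) / 2 ^ Suc i = of_bool (bdig i (u c)) / 2 ^ Suc i" for i
  proof -
    have "(n * i + c) div n = i" "(n * i + c) mod n = c" using c by auto
    then show ?thesis unfolding cg_ccode d by simp
  qed
  then have "cdec n c (ccode d) = (\<Sum>i. of_bool (bdig i (u c)) / 2 ^ Suc i)"
    unfolding cdec_def by simp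
  also have "\<dots> = u c" using bdig_sums[OF u] by (rule sums_unique[symmetric])
  finally show ?thesis .
qed



lemma ccode_bounds: "0 \<le> ccode d" "ccode d \<le> 1"
proof -
  have s: "summable (\<lambda>q. 2 * of_bool (d q) / 4 ^ Suc q :: real)"
    by (rule summable_comparison_test[OF _ summable_geo4[of 2]]) (auto simp: divide_simps)
  show "0 \<le> ccode d" unfolding ccode_def by (rule suminf_nonneg[OF s]) simp
  have s2: "summable (\<lambda>q. (1/2) * (1/4) ^ q :: real)" by (intro summable_mult summable_geometric) simp
  have "ccode d \<le> (\<Sum>q. (1/2) * (1/4) ^ q)"
    unfolding ccode_def
  proof (rule suminf_le[OF _ s s2])
    fix q
    have "2 * of_bool (d q) / 4 ^ Suc q \<le> (2::real) / 4 ^ Suc q" by (auto simp: divide_simps)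
    also have "\<dots> = (1/2) * (1/4) ^ q" by (simp add: power_one_over)
    finally show "2 * of_bool (d q) / 4 ^ Suc q \<le> (1/2) * (1/4::real) ^ q" .
  qed
  also have "\<dots> = (1/2) * (1 / (1 - 1/4))"
  proof -
    have "(\<Sum>q. (1/2) * (1/4::real) ^ q) = (1/2) * (\<Sum>q. (1/4::real) ^ q)"
      by (rule suminf_mult) (rule summable_geometric, simp)
    also have "(\<Sum>q. (1/4::real) ^ q) = 1 / (1 - 1/4)" by (rule suminf_geometric) simp
    finally show ?thesis .
  qed
  finally show "ccode d \<le> 1" by simp
qed

lemma coding_exists:
  fixes R :: real
  assumes R: "R > 0"
  shows "\<exists>(enc :: 'a::euclidean_space \<Rightarrow> real) (dec :: real \<Rightarrow> 'a). continuous_on UNIV dec \<and>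
     (\<forall>z. 0 \<le> enc z \<and> enc z \<le> 1) \<and> (\<forall>z. (\<forall>b\<in>Basis. \<bar>z \<bullet> b\<bar> < R) \<longrightarrow> dec (enc z) = z)"
proof -
  define n where "n = DIM('a)"
  obtain idx where idx: "bij_betw idx (Basis :: 'a set) {0..<n}"
    using ex_bij_betw_finite_nat[of "Basis :: 'a set"] unfolding n_def by auto
  define binv where "binv = inv_into (Basis :: 'a set) idx"
  define enc where "enc z = ccode (\<lambda>p. bdig (p div n) ((z \<bullet> binv (p mod n) + R) / (2 * R)))" for z :: 'a
  define dec where "dec t = (\<Sum>b\<in>Basis. (2 * R * cdec n (idx b) t - R) *\<^sub>R b)" for t
  have "continuous_on UNIV dec"
    unfolding dec_def by (intro continuous_intros continuous_on_compose2[OF continuous_cdec]) auto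
  moreover have "\<forall>z. 0 \<le> enc z \<and> enc z \<le> 1" unfolding enc_def using ccode_bounds by auto
  moreover have "dec (enc z) = z" if z: "\<forall>b\<in>Basis. \<bar>z \<bullet> b\<bar> < R" for z
  proof -
    have "2 * R * cdec n (idx b) (enc z) - R = z \<bullet> b" if b: "b \<in> Basis" for b
    proof -
      define u where "u j = (z \<bullet> binv j + R) / (2 * R)" for j
      have c: "idx b < n" using idx b by (auto simp: bij_betw_def)
      have bi: "binv (idx b) = b" unfolding binv_def using idx b by (simp add: bij_betw_inv_into_left)
      have u: "0 \<le> u (idx b)" "u (idx b) < 1" unfolding u_def bi using z b R by (auto simp: field_simps)
      have "cdec n (idx b) (enc z) = u (idx b)"
        unfolding enc_def using c u by (intro cdec_ccode[where u=u]) (simp_all add: u_def)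
      then show ?thesis unfolding u_def bi using R by (simp add: field_simps)
    qed
    then have "dec (enc z) = (\<Sum>b\<in>Basis. (z \<bullet> b) *\<^sub>R b)" unfolding dec_def by simp
    also have "\<dots> = z" by (rule euclidean_representation)
    finally show ?thesis .
  qed
  ultimately show ?thesis by blast
qed



lemma weak_conv_closed_lower:
  fixes \<mu> :: "nat \<Rightarrow> real measure"
  assumes \<mu>: "\<And>n. real_distribution (\<mu> n)" and M: "real_distribution M"
    and wc: "weak_conv_m \<mu> M" and C: "closed C"
    and ev: "\<forall>\<^sub>F n in sequentially. a \<le> measure (\<mu> n) C"
  shows "a \<le> measure M C"
proof (cases "C = {}")
  case True
  have "\<forall>\<^sub>F n in sequentially. a \<le> 0" using ev by (simp add: True)
  then have "a \<le> 0" by (simp add: eventually_sequentially) (metis order_refl)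
  then show ?thesis by (simp add: True)
next
  case False
  interpret M: real_distribution M by fact
  define f where "f j t = max 0 (1 - real j * infdist t C)" for j :: nat and t :: real
  have cf: "isCont (f j) t" for j t
  proof -
    have "continuous_on UNIV (f j)" unfolding f_def
      by (intro continuous_intros continuous_on_infdist continuous_on_id)
    then show ?thesis by (simp add: continuous_on_eq_continuous_at)
  qed
  have fb: "norm (f j t) \<le> 1" for j t
    unfolding f_def using infdist_nonneg[of t C] by (auto simp: mult_nonneg_nonneg)
  have fm: "f j \<in> borel_measurable borel" for j
    using cf by (intro borel_measurable_continuous_onI) (simp add: continuous_at_imp_continuous_on)
  have ind: "indicator C t \<le> f j t" for j t
  proof (cases "t \<in> C")
    case True
    then have "infdist t C = 0" by simp
    then show ?thesis using True unfolding f_def by simp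
  qed (simp add: f_def)
  have lj: "a \<le> integral\<^sup>L M (f j)" for j
  proof (rule tendsto_lowerbound[OF weak_conv_imp_integral_bdd_continuous_conv[OF \<mu> M wc cf fb]])
    show "\<forall>\<^sub>F n in sequentially. a \<le> integral\<^sup>L (\<mu> n) (f j)"
      using ev
    proof eventually_elim
      case (elim n)
      interpret real_distribution "\<mu> n" by (rule \<mu>)
      have "measure (\<mu> n) C = integral\<^sup>L (\<mu> n) (indicator C)"
        using C by (simp add: borel_closed)
      also have "\<dots> \<le> integral\<^sup>L (\<mu> n) (f j)"
        using C fm fb ind by (intro integral_mono) (auto simp: borel_closed intro!: integrable_const_bound[where B=1])
      finally show ?case using elim by simp
    qed
  qed simp
  have lim: "(\<lambda>j. integral\<^sup>L M (f j)) \<longlonglongrightarrow> integral\<^sup>L M (indicator C)"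
  proof (rule integral_dominated_convergence[where w="\<lambda>_. 1"])
    show "indicator C \<in> borel_measurable M" using C by (simp add: borel_closed)
    show "f j \<in> borel_measurable M" for j using fm by simp
    show "integrable M (\<lambda>_. 1)" by simp
    show "AE x in M. norm (f j x) \<le> 1" for j using fb by simp
    show "AE x in M. (\<lambda>j. f j x) \<longlonglongrightarrow> indicator C x"
    proof (rule AE_I2)
      fix x
      show "(\<lambda>j. f j x) \<longlonglongrightarrow> indicator C x"
      proof (cases "x \<in> C")
        case True
        then show ?thesis unfolding f_def by simp
      next
        case xC: False
        then have d: "infdist x C > 0" using in_closed_iff_infdist_zero[OF C False] infdist_nonneg[of x C] by auto
        obtain N :: nat where N: "1 / infdist x C < real N" using reals_Archimedean2 by blast
        have "\<forall>j\<ge>N. f j x = 0"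
        proof (intro allI impI)
          fix j assume "N \<le> j"
          then have "1 / infdist x C < real j" using N by linarith
          then have "1 < real j * infdist x C" using d by (simp add: divide_less_eq)
          then show "f j x = 0" unfolding f_def by simp
        qed
        then have "(\<lambda>j. f j x) \<longlonglongrightarrow> 0" by (intro tendsto_eventually) (auto simp: eventually_sequentially)
        then show ?thesis using xC by simp
      qed
    qed
  qed
  have "a \<le> integral\<^sup>L M (indicator C)"
    by (rule tendsto_lowerbound[OF lim]) (use lj in auto)
  then show ?thesis using C by (simp add: borel_closed)
qed



lemma M_omega_ge:
  fixes K T :: "'a::euclidean_space set"
  assumes "finite S" "\<forall>x\<in>S. 0 \<le> w x" "\<forall>y. (\<Sum>x\<in>S. w x * indicator T (y - x)) \<le> 1"
  shows "ennreal (\<Sum>x\<in>S \<inter> K. w x) \<le> M_omega K T"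
  unfolding M_omega_def
  by (rule SUP_upper[where f="\<lambda>(S, w). ennreal (\<Sum>x\<in>S \<inter> K. w x)" and i="(S, w)", simplified]) (use assms in auto)

lemma M_omega_ge_1:
  fixes K T :: "'a::euclidean_space set"
  assumes "y0 \<in> K"
  shows "1 \<le> M_omega K T"
proof -
  have "ennreal (\<Sum>x\<in>{y0} \<inter> K. (\<lambda>_. 1::real) x) \<le> M_omega K T"
  proof (rule M_omega_ge)
    show "\<forall>y. (\<Sum>x\<in>{y0}. (\<lambda>_. 1::real) x * indicator T (y - x)) \<le> 1"
    proof
      fix y show "(\<Sum>x\<in>{y0}. (\<lambda>_. 1::real) x * indicator T (y - x)) \<le> 1"
        by (simp add: indicator_le_1)
    qed
  qed auto
  then show ?thesis using assms by simp
qed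

lemma packing_bound:
  fixes K T :: "'a::euclidean_space set" and m :: real
  assumes Mo: "M_omega K T = ennreal m" and m: "m > 0"
    and F: "finite F" "F \<subseteq> K" "F \<noteq> {}" and Tne: "T \<noteq> {}"
    and W: "\<forall>y\<in>F. W y > 0"
  shows "\<exists>z. (\<Sum>y\<in>F. W y) / m \<le> (\<Sum>y\<in>F. if z - y \<in> T then W y else 0)"
proof -
  define v where "v z = (\<Sum>y\<in>F. if z - y \<in> T then W y else 0)" for z
  have Vsub: "range v \<subseteq> (\<lambda>P. \<Sum>y\<in>P. W y) ` Pow F"
  proof
    fix a assume "a \<in> range v"
    then obtain z where a: "a = v z" by auto
    have "v z = (\<Sum>y\<in>{y\<in>F. z - y \<in> T}. W y)" unfolding v_def using F(1) by (simp add: sum.If_cases Int_def)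
    then show "a \<in> (\<lambda>P. \<Sum>y\<in>P. W y) ` Pow F" using a by auto
  qed
  have finV: "finite (range v)" using F(1) by (intro finite_subset[OF Vsub]) simp
  define s where "s = Max (range v)"
  have vs: "v z \<le> s" for z unfolding s_def using finV by (intro Max_ge) auto
  have "s \<in> range v" unfolding s_def using finV by (intro Max_in) auto
  then obtain z0 where z0: "v z0 = s" by auto
  obtain y0 t0 where y0: "y0 \<in> F" and t0: "t0 \<in> T" using F Tne by auto
  have "W y0 \<le> v (y0 + t0)"
  proof -
    have "W y0 = (if (y0 + t0) - y0 \<in> T then W y0 else 0)" using t0 by simp
    also have "\<dots> \<le> v (y0 + t0)" unfolding v_def using F(1) y0 W
      by (intro member_le_sum) (auto simp: less_imp_le)
    finally show ?thesis .
  qed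
  then have spos: "s > 0" using vs[of "y0 + t0"] W y0 by fastforce
  show ?thesis
  proof (rule ccontr)
    assume "\<not> ?thesis"
    then have lt: "s < (\<Sum>y\<in>F. W y) / m" using z0 unfolding v_def by (metis not_le)
    define w where "w y = W y / s" for y
    have "ennreal (\<Sum>x\<in>F \<inter> K. w x) \<le> M_omega K T"
    proof (rule M_omega_ge)
      show "finite F" by fact
      show "\<forall>x\<in>F. 0 \<le> w x" using W spos by (auto simp: w_def less_imp_le)
      show "\<forall>y. (\<Sum>x\<in>F. w x * indicator T (y - x)) \<le> 1"
      proof
        fix y
        have "(\<Sum>x\<in>F. w x * indicator T (y - x)) = v y / s"
          unfolding v_def w_def sum_divide_distrib by (intro sum.cong) (auto simp: indicator_def)
        also have "\<dots> \<le> 1" using vs[of y] spos by simp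
        finally show "(\<Sum>x\<in>F. w x * indicator T (y - x)) \<le> 1" .
      qed
    qed
    moreover have "F \<inter> K = F" using F by auto
    ultimately have "ennreal ((\<Sum>y\<in>F. W y) / s) \<le> ennreal m"
      unfolding Mo w_def sum_divide_distrib[symmetric] by simp
    then have "(\<Sum>y\<in>F. W y) / s \<le> m" using m by (simp add: ennreal_le_iff)
    then have "(\<Sum>y\<in>F. W y) \<le> m * s" using spos by (simp add: divide_le_eq)
    moreover have "s * m < (\<Sum>y\<in>F. W y)" using lt m by (simp add: less_divide_eq)
    ultimately show False by (simp add: algebra_simps)
  qed
qed


lemma cover_step:
  fixes K T :: "'a::euclidean_space set" and m e \<epsilon> :: real
  assumes K: "compact K" "K \<noteq> {}" and Tne: "T \<noteq> {}"
    and Mo: "M_omega K T = ennreal m" and m: "m \<ge> 1" and e: "e > 0" and \<epsilon>: "\<epsilon> > 0"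
  shows "\<exists>R zs. R > (0::nat) \<and> (\<forall>t. \<exists>y\<in>K. zs t - y \<in> T) \<and>
     (\<forall>x\<in>K. \<exists>y. dist y x < e \<and> real R \<le> (1 + \<epsilon>) * m * real (card {t\<in>{..<R}. zs t - y \<in> T}))"
proof -
  have "K \<subseteq> (\<Union>x\<in>K. ball x e)" using e by auto
  then obtain F where F: "F \<subseteq> K" "finite F" "K \<subseteq> (\<Union>x\<in>F. ball x e)"
    using compactE_image[OF K(1), of K "\<lambda>x. ball x e"] by auto
  have Fne: "F \<noteq> {}" using F K(2) by auto
  have good: "\<exists>z. (\<Sum>y\<in>F. W y) / m \<le> (\<Sum>y\<in>F. if z - y \<in> T then W y else 0)" if "\<forall>y\<in>F. W y > 0" for W
    using packing_bound[OF Mo _ F(2) F(1) Fne Tne that] m by simp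
  obtain R zs where R: "R > 0" and cov: "\<forall>y\<in>F. real R \<le> (1 + \<epsilon>) * m * real (card {t\<in>{..<R}. zs t - y \<in> T})"
    using mw_cover[OF F(2) Fne m \<epsilon>, where A="\<lambda>z y. z - y \<in> T", OF good] by blast
  obtain y0 t0 where y0: "y0 \<in> K" and t0: "t0 \<in> T" using K Tne by auto
  define zs' where "zs' t = (if \<exists>y\<in>K. zs t - y \<in> T then zs t else y0 + t0)" for t
  have inQ: "\<forall>t. \<exists>y\<in>K. zs' t - y \<in> T"
  proof
    fix t show "\<exists>y\<in>K. zs' t - y \<in> T"
    proof (cases "\<exists>y\<in>K. zs t - y \<in> T")
      case True then show ?thesis unfolding zs'_def by simp
    next
      case False then show ?thesis unfolding zs'_def using y0 t0 by (intro bexI[of _ y0]) auto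
    qed
  qed
  have sub: "{t\<in>{..<R}. zs t - y \<in> T} \<subseteq> {t\<in>{..<R}. zs' t - y \<in> T}" if "y \<in> K" for y
    using that unfolding zs'_def by auto
  have "\<forall>x\<in>K. \<exists>y. dist y x < e \<and> real R \<le> (1 + \<epsilon>) * m * real (card {t\<in>{..<R}. zs' t - y \<in> T})"
  proof
    fix x assume "x \<in> K"
    then obtain y where y: "y \<in> F" "x \<in> ball y e" using F by auto
    have "card {t\<in>{..<R}. zs t - y \<in> T} \<le> card {t\<in>{..<R}. zs' t - y \<in> T}"
      using sub[of y] y F by (intro card_mono) auto
    then have "real R \<le> (1 + \<epsilon>) * m * real (card {t\<in>{..<R}. zs' t - y \<in> T})"
    proof -
      have "real R \<le> (1 + \<epsilon>) * m * real (card {t\<in>{..<R}. zs t - y \<in> T})" using cov y by blast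
      also have "\<dots> \<le> (1 + \<epsilon>) * m * real (card {t\<in>{..<R}. zs' t - y \<in> T})"
        using \<open>card _ \<le> card _\<close> m \<epsilon> by (intro mult_left_mono) auto
      finally show ?thesis .
    qed
    then show "\<exists>y. dist y x < e \<and> real R \<le> (1 + \<epsilon>) * m * real (card {t\<in>{..<R}. zs' t - y \<in> T})"
      using y by (intro exI[of _ y]) (auto simp: dist_commute)
  qed
  then show ?thesis using R inQ by blast
qed



lemma hard_direction:
  fixes K T :: "'a::euclidean_space set"
  assumes K: "compact K" and Tc: "compact T" and Ti: "interior T \<noteq> {}"
  shows "N_star K (uminus ` T) \<le> M_omega K T"
proof (cases "K = {}")
  case True
  define \<nu> :: "'a measure" where "\<nu> = null_measure borel"
  have "regular_borel \<nu>" unfolding \<nu>_def by (rule regular_borel_finite) auto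
  moreover have "\<forall>x. indicator K x \<le> conv_ind \<nu> (uminus ` T) x" using True by simp
  ultimately have "N_star K (uminus ` T) \<le> emeasure \<nu> UNIV"
    unfolding N_star_def by (intro INF_lower) auto
  also have "\<dots> = 0" unfolding \<nu>_def by simp
  finally show ?thesis by simp
next
  case Kne: False
  show ?thesis
  proof (cases "M_omega K T = \<infinity>")
    case True then show ?thesis by simp
  next
    case False
    then obtain m where Mo: "M_omega K T = ennreal m" and m0: "m \<ge> 0"
      by (cases "M_omega K T") auto
    obtain y0 where y0: "y0 \<in> K" using Kne by auto
    have m: "m \<ge> 1" using M_omega_ge_1[OF y0, of T] Mo m0 by simp
    have Tne: "T \<noteq> {}" using Ti interior_subset by blast
    define P where "P k Rk zk \<longleftrightarrow> Rk > (0::nat) \<and> (\<forall>t. \<exists>y\<in>K. zk t - y \<in> T) \<and>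
       (\<forall>x\<in>K. \<exists>y. dist y x < 1 / (real k + 1) \<and> real Rk \<le> (1 + 1 / (real k + 1)) * m * real (card {t\<in>{..<Rk}. zk t - y \<in> T}))"
      for k :: nat and Rk and zk :: "nat \<Rightarrow> 'a"
    have "\<forall>k. \<exists>p. P k (fst p) (snd p)"
    proof
      fix k :: nat
      have "\<exists>Rk zk. P k Rk zk" unfolding P_def using cover_step[OF K Kne Tne Mo m, of "1 / (real k + 1)" "1 / (real k + 1)"] by simp
      then obtain Rk zk where "P k Rk zk" by blast
      then show "\<exists>p. P k (fst p) (snd p)" by (intro exI[of _ "(Rk, zk)"]) simp
    qed
    from choice[OF this] obtain f where f: "\<And>k. P k (fst (f k)) (snd (f k))" by blast
    define R where "R k = fst (f k)" for k
    define zs where "zs k = snd (f k)" for k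
    have R: "\<And>k. R k > 0" and zQ: "\<And>k t. \<exists>y\<in>K. zs k t - y \<in> T"
      and cov: "\<And>k x. x \<in> K \<Longrightarrow> \<exists>y. dist y x < 1 / (real k + 1) \<and>
          real (R k) \<le> (1 + 1 / (real k + 1)) * m * real (card {t\<in>{..<R k}. zs k t - y \<in> T})"
      using f unfolding P_def R_def zs_def by blast+
    obtain BK where BK: "\<forall>y\<in>K. norm y \<le> BK" using compact_imp_bounded[OF K] by (auto simp: bounded_iff)
    obtain BT where BT: "\<forall>y\<in>T. norm y \<le> BT" using compact_imp_bounded[OF Tc] by (auto simp: bounded_iff)
    have BKn: "BK \<ge> 0" using BK y0 norm_ge_zero order_trans by blast
    have zb: "norm (zs k t) \<le> BK + BT" for k t
    proof -
      obtain y where y: "y \<in> K" "zs k t - y \<in> T" using zQ[of k t] by blast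
      have "norm (zs k t) \<le> norm y + norm (zs k t - y)" by (metis add.commute diff_add_cancel norm_triangle_ineq)
      also have "\<dots> \<le> BK + BT" using BK BT y by (intro add_mono) auto
      finally show ?thesis .
    qed
    define Rb where "Rb = BK + BT + 1"
    have BTn: "BT \<ge> 0" using BT Tne norm_ge_zero order_trans by blast
    have Rb: "Rb > 0" unfolding Rb_def using BKn BTn by simp
    obtain enc :: "'a \<Rightarrow> real" and dec :: "real \<Rightarrow> 'a" where
      cdec: "continuous_on UNIV dec" and encb: "\<And>z. 0 \<le> enc z \<and> enc z \<le> 1"
      and decenc: "\<And>z. (\<forall>b\<in>Basis. \<bar>z \<bullet> b\<bar> < Rb) \<Longrightarrow> dec (enc z) = z"
      using coding_exists[OF Rb] by metis
    have de: "dec (enc (zs k t)) = zs k t" for k t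
    proof (rule decenc, rule ballI)
      fix b :: 'a assume "b \<in> Basis"
      then have "\<bar>zs k t \<bullet> b\<bar> \<le> norm (zs k t)" by (rule Basis_le_norm)
      then show "\<bar>zs k t \<bullet> b\<bar> < Rb" using zb[of k t] unfolding Rb_def by simp
    qed
    define \<rho> where "\<rho> k = distr (measure_pmf (pmf_of_set {..<R k})) borel (\<lambda>t. enc (zs k t))" for k
    have meas_enc: "(\<lambda>t. enc (zs k t)) \<in> measurable (measure_pmf (pmf_of_set {..<R k})) borel" for k
      by simp
    have rd: "real_distribution (\<rho> k)" for k
      unfolding real_distribution_def real_distribution_axioms_def \<rho>_def
      using meas_enc[of k] by (auto intro!: measure_pmf.prob_space_distr)
    have mrho: "measure (\<rho> k) E = real (card {t\<in>{..<R k}. enc (zs k t) \<in> E}) / real (R k)"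
      if "E \<in> sets borel" for k E
    proof -
      have ne: "{..<R k} \<noteq> {}" using R[of k] by auto
      have "measure (\<rho> k) E = measure (measure_pmf (pmf_of_set {..<R k})) ((\<lambda>t. enc (zs k t)) -` E)"
        unfolding \<rho>_def using meas_enc[of k] that by (subst measure_distr) auto
      also have "\<dots> = real (card ({..<R k} \<inter> (\<lambda>t. enc (zs k t)) -` E)) / real (card {..<R k})"
        using ne by (subst measure_pmf_of_set) auto
      also have "{..<R k} \<inter> (\<lambda>t. enc (zs k t)) -` E = {t\<in>{..<R k}. enc (zs k t) \<in> E}" by auto
      finally show ?thesis by simp
    qed
    have tight: "tight \<rho>"
      unfolding tight_def
    proof (intro conjI allI impI)
      show "real_distribution (\<rho> n)" for n by (rule rd)
      fix \<epsilon> :: real assume "\<epsilon> > 0"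
      have "\<forall>n. 1 - \<epsilon> < measure (\<rho> n) {-1<..1}"
      proof
        fix n
        have "enc (zs n t) \<in> {-1<..1}" for t using encb[of "zs n t"] by simp
        then have "{t\<in>{..<R n}. enc (zs n t) \<in> {-1<..1}} = {..<R n}" by blast
        then have "measure (\<rho> n) {-1<..1} = 1" using mrho[of "{-1<..1}" n] R[of n] by simp
        then show "1 - \<epsilon> < measure (\<rho> n) {-1<..1}" using \<open>\<epsilon> > 0\<close> by simp
      qed
      then show "\<exists>a b. a < b \<and> (\<forall>n. 1 - \<epsilon> < measure (\<rho> n) {a<..b})"
        by (intro exI[of _ "-1"] exI[of _ 1]) simp
    qed
    obtain r M where r: "strict_mono r" and M: "real_distribution M" and wc: "weak_conv_m (\<rho> \<circ> id \<circ> r) M"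
      using tight_imp_convergent_subsubsequence[OF tight strict_mono_id] by blast
    interpret M: real_distribution M by (rule M)
    have spM: "space M = UNIV" by simp
    define D where "D = distr M borel dec"
    define \<nu> where "\<nu> = density D (\<lambda>_. ennreal m)"
    have dm: "dec \<in> borel_measurable M"
      using cdec by (simp add: borel_measurable_continuous_onI measurable_cong_sets[OF M.events_eq_borel refl])
    have sD: "sets D = sets borel" unfolding D_def by simp
    have s\<nu>: "sets \<nu> = sets borel" unfolding \<nu>_def using sD by simp
    have em\<nu>: "emeasure \<nu> A = ennreal m * emeasure M (dec -` A)" if "A \<in> sets borel" for A
    proof -
      have "emeasure \<nu> A = ennreal m * emeasure D A" unfolding \<nu>_def using that sD by (intro emeasure_density_const) simp
      also have "emeasure D A = emeasure M (dec -` A)" unfolding D_def using dm that by (subst emeasure_distr) auto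
      finally show ?thesis .
    qed
    have tot: "emeasure \<nu> UNIV = ennreal m" using em\<nu>[of UNIV] M.emeasure_space_1 by simp
    have reg: "regular_borel \<nu>" using s\<nu> tot by (intro regular_borel_finite) auto
    have cover: "\<forall>x. indicator K x \<le> conv_ind \<nu> (uminus ` T) x"
    proof
      fix x
      show "indicator K x \<le> conv_ind \<nu> (uminus ` T) x"
      proof (cases "x \<in> K")
        case False then show ?thesis by simp
      next
        case xK: True
        define Cx where "Cx = {z. z - x \<in> T}"
        define C where "C j = {z. infdist (z - x) T \<le> 1 / (real j + 1)}" for j :: nat
        define E where "E j = dec -` C j" for j
        have Tcl: "closed T" using Tc by (rule compact_imp_closed)
        have contx: "continuous_on UNIV (\<lambda>z::'a. z - x)" by (intro continuous_intros)
        have Ccl: "closed (C j)" for j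
        proof -
          have "continuous_on UNIV (\<lambda>z::'a. infdist (z - x) T)" by (intro continuous_intros continuous_on_infdist)
          then show ?thesis unfolding C_def using closed_vimage[of "{..1 / (real j + 1)}" "\<lambda>z. infdist (z - x) T"]
            by (simp add: vimage_def)
        qed
        have Ecl: "closed (E j)" for j unfolding E_def by (rule closed_vimage[OF Ccl cdec])
        have Eb: "E j \<in> sets borel" for j using Ecl by (rule borel_closed)
        have Cxcl: "closed Cx" unfolding Cx_def using closed_vimage[OF Tcl contx] by (simp add: vimage_def)
        have CxC: "Cx = (\<Inter>j. C j)"
        proof (intro equalityI subsetI)
          fix z assume "z \<in> Cx"
          then have "infdist (z - x) T = 0" unfolding Cx_def by simp
          then show "z \<in> (\<Inter>j. C j)" unfolding C_def by auto
        next
          fix z assume z: "z \<in> (\<Inter>j. C j)"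
          have "infdist (z - x) T \<le> 0"
          proof (rule field_le_epsilon)
            fix e :: real assume "e > 0"
            then obtain j :: nat where "1 / e < real j" using reals_Archimedean2 by blast
            then have "1 / e < real j + 1" by linarith
            then have "1 < (real j + 1) * e" using \<open>e > 0\<close> by (simp add: divide_less_eq)
            then have "1 / (real j + 1) < e" by (simp add: divide_less_eq mult.commute)
            moreover have "infdist (z - x) T \<le> 1 / (real j + 1)" using z unfolding C_def by auto
            ultimately show "infdist (z - x) T \<le> 0 + e" by simp
          qed
          then have "infdist (z - x) T = 0" using infdist_nonneg[of "z - x" T] by simp
          then show "z \<in> Cx" unfolding Cx_def using in_closed_iff_infdist_zero[OF Tcl Tne] by simp
        qed
        have key: "1 / ((1 + 1 / (real i + 1)) * m) \<le> measure M (E j)" for i j :: nat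
        proof (rule weak_conv_closed_lower[OF _ M wc Ecl])
          show "real_distribution ((\<rho> \<circ> id \<circ> r) n)" for n using rd by simp
          show "\<forall>\<^sub>F n in sequentially. 1 / ((1 + 1 / (real i + 1)) * m) \<le> measure ((\<rho> \<circ> id \<circ> r) n) (E j)"
            unfolding eventually_sequentially
          proof (intro exI[of _ "max i j"] allI impI)
            fix n assume n: "max i j \<le> n"
            define k where "k = r n"
            have kn: "n \<le> k" unfolding k_def using r by (rule seq_suble)
            obtain y where y: "dist y x < 1 / (real k + 1)"
              and Rk: "real (R k) \<le> (1 + 1 / (real k + 1)) * m * real (card {t\<in>{..<R k}. zs k t - y \<in> T})"
              using cov[OF xK, of k] by blast
            have ki: "1 / (real k + 1) \<le> 1 / (real i + 1)" "1 / (real k + 1) \<le> 1 / (real j + 1)"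
              using n kn by (auto intro!: divide_left_mono)
            have sub: "{t\<in>{..<R k}. zs k t - y \<in> T} \<subseteq> {t\<in>{..<R k}. enc (zs k t) \<in> E j}"
            proof safe
              fix t assume t: "t < R k" "zs k t - y \<in> T"
              have "infdist (zs k t - x) T \<le> dist (zs k t - x) (zs k t - y)" by (rule infdist_le[OF t(2)])
              also have "\<dots> = dist y x" by (simp add: dist_norm norm_minus_commute)
              finally have "infdist (zs k t - x) T \<le> 1 / (real j + 1)" using y ki by linarith
              then show "enc (zs k t) \<in> E j" unfolding E_def C_def using de[of k t] by simp
            qed
            have cle: "card {t\<in>{..<R k}. zs k t - y \<in> T} \<le> card {t\<in>{..<R k}. enc (zs k t) \<in> E j}"
              using sub by (intro card_mono) auto
            have Rpos: "real (R k) > 0" using R[of k] by simp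
            have "real (R k) \<le> (1 + 1 / (real i + 1)) * m * real (card {t\<in>{..<R k}. enc (zs k t) \<in> E j})"
            proof -
              have "real (R k) \<le> (1 + 1 / (real k + 1)) * m * real (card {t\<in>{..<R k}. zs k t - y \<in> T})" by (rule Rk)
              also have "\<dots> \<le> (1 + 1 / (real i + 1)) * m * real (card {t\<in>{..<R k}. enc (zs k t) \<in> E j})"
                using ki cle m by (intro mult_mono) auto
              finally show ?thesis .
            qed
            moreover have Apos: "(1 + 1 / (real i + 1)) * m > 0" using m by (simp add: add_pos_nonneg)
            ultimately have "real (R k) / ((1 + 1 / (real i + 1)) * m) \<le> real (card {t\<in>{..<R k}. enc (zs k t) \<in> E j})"
              by (simp add: divide_le_eq mult.commute)
            then have "real (R k) / ((1 + 1 / (real i + 1)) * m) / real (R k) \<le> real (card {t\<in>{..<R k}. enc (zs k t) \<in> E j}) / real (R k)"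
              using Rpos by (intro divide_right_mono) auto
            then have "1 / ((1 + 1 / (real i + 1)) * m) \<le> real (card {t\<in>{..<R k}. enc (zs k t) \<in> E j}) / real (R k)"
              using Rpos by simp
            then show "1 / ((1 + 1 / (real i + 1)) * m) \<le> measure ((\<rho> \<circ> id \<circ> r) n) (E j)"
              using mrho[OF Eb, of k] unfolding k_def by simp
          qed
        qed
        have keyj: "1 / m \<le> measure M (E j)" for j
        proof -
          have "(\<lambda>i::nat. 1 / ((1 + 1 / (real i + 1)) * m)) \<longlonglongrightarrow> 1 / ((1 + 0) * m)"
          proof -
            have "(\<lambda>i::nat. 1 / (real i + 1)) \<longlonglongrightarrow> 0"
              using LIMSEQ_inverse_real_of_nat by (simp add: inverse_eq_divide add.commute)
            then show ?thesis using m by (intro tendsto_intros) auto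
          qed
          then show ?thesis using key[of _ j] by (intro LIMSEQ_le_const2) auto
        qed
        have decE: "decseq E"
          unfolding decseq_def E_def C_def
        proof (intro allI impI subsetI)
          fix a b :: nat and z assume "a \<le> b" "z \<in> dec -` {z. infdist (z - x) T \<le> 1 / (real b + 1)}"
          then show "z \<in> dec -` {z. infdist (z - x) T \<le> 1 / (real a + 1)}"
          proof -
            have "1 / (real b + 1) \<le> 1 / (real a + 1)" using \<open>a \<le> b\<close> by (intro divide_left_mono) auto
            then show ?thesis using \<open>z \<in> _\<close> by auto
          qed
        qed
        have "(\<lambda>j. measure M (E j)) \<longlonglongrightarrow> measure M (\<Inter>j. E j)"
          using Eb decE by (intro M.finite_Lim_measure_decseq) auto
        then have "1 / m \<le> measure M (\<Inter>j. E j)"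
          using keyj by (intro LIMSEQ_le_const) auto
        moreover have "(\<Inter>j. E j) = dec -` Cx" unfolding E_def CxC by auto
        ultimately have mC: "1 / m \<le> measure M (dec -` Cx)" by simp
        have Cxb: "Cx \<in> sets borel" using Cxcl by (rule borel_closed)
        have "conv_ind \<nu> (uminus ` T) x = (\<integral>\<^sup>+ z. indicator Cx z \<partial>\<nu>)"
          unfolding conv_ind_def indicator_uminus_image Cx_def by (simp add: indicator_def)
        also have "\<dots> = emeasure \<nu> Cx" using Cxb s\<nu> by (intro nn_integral_indicator) simp
        also have "\<dots> = ennreal m * emeasure M (dec -` Cx)" by (rule em\<nu>[OF Cxb])
        also have "\<dots> = ennreal (m * measure M (dec -` Cx))"
          using m by (simp add: M.emeasure_eq_measure ennreal_mult)
        finally have eq: "conv_ind \<nu> (uminus ` T) x = ennreal (m * measure M (dec -` Cx))" .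
        have "1 \<le> m * measure M (dec -` Cx)" using mC m by (simp add: divide_le_eq mult.commute)
        then show ?thesis using xK eq by simp
      qed
    qed
    have "N_star K (uminus ` T) \<le> emeasure \<nu> UNIV"
      unfolding N_star_def using reg cover by (intro INF_lower) auto
    then show ?thesis using tot Mo by simp
  qed
qed



lemma M_star_le_N_star:
  fixes K T :: "'a::euclidean_space set"
  assumes K: "compact K" and Tc: "compact T" and Ti: "interior T \<noteq> {}"
  shows "M_star K T \<le> N_star K (uminus ` T)"
  unfolding M_star_def N_star_def
proof (rule SUP_least, rule INF_greatest)
  fix \<mu> \<nu> :: "'a measure"
  assume mu: "\<mu> \<in> {\<mu>. regular_borel \<mu> \<and> (\<forall>x. conv_ind \<mu> T x \<le> 1)}"
    and nu: "\<nu> \<in> {\<mu>. regular_borel \<mu> \<and> (\<forall>x. indicator K x \<le> conv_ind \<mu> (uminus ` T) x)}"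
  show "emeasure \<mu> K \<le> emeasure \<nu> UNIV"
    using mu nu by (intro weak_duality[OF K Tc Ti]) (auto simp: regular_borel_def)
qed

theorem theorem1p3:
  fixes K T :: "'a::euclidean_space set"
  assumes "compact K" and "compact T" and "interior T \<noteq> {}"
  shows "M_omega K T = M_star K T \<and> M_star K T = N_star K (uminus ` T)"
proof -
  have 1: "M_omega K T \<le> M_star K T" using M_omega_le_M_star assms by blast
  have 2: "M_star K T \<le> N_star K (uminus ` T)" using M_star_le_N_star assms by blast
  have 3: "N_star K (uminus ` T) \<le> M_omega K T" using hard_direction assms by blast
  show ?thesis using 1 2 3 by (metis order_antisym order_trans)
qed


end
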